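(* Let $A$ and $B$ be automata and let $(b,n)$ be a normed backward simulation from $A$ to $B$. Then (1) $[A,B]\in b$, i.e., every finite execution of $A$ is $b$-related to some finite execution of $B$; (2) if moreover $b$ is image-finite (i.e., $b[s]$ is finite for every $s\in\mathrm{states}(A)$), then $(A,B)\in b$, i.e., every execution of $A$ is $b$-related to some execution of $B$.
   Context: An automaton $A$ consists of a set $\mathrm{states}(A)$ of states, a nonempty set $\mathrm{start}(A)\subseteq\mathrm{states}(A)$ of start states, a set $\mathrm{acts}(A)$ of actions containing a distinguished internal action $\tau$, and a set $\mathrm{steps}(A)\subseteq\mathrm{states}(A)\times\mathrm{acts}(A)\times\mathrm{states}(A)$ of steps; write $s\xrightarrow{a}_A t$ for $(s,a,t)\in\mathrm{steps}(A)$. An execution fragment of $A$ is a finite or infinite alternating sequence $s_0a_1s_1a_2s_2\cdots$ of states and actions, beginning with a state and, if finite, ending with a state, such that $s_{i-1}\xrightarrow{a_i}_A s_i$ for all $i>0$; its index set $\mathrm{Index}(\alpha)$ is the set of indices $i$ of its states $s_i$. An execution is an execution fragment whose first state is a start state. For a relation $R$ write $R[s]=\{u\mid (s,u)\in R\}$. Execution correspondence: Let $R\subseteq\mathrm{states}(A)\times\mathrm{states}(B)$ and let $\alpha=s_0a_1s_1\cdots$ and $\alpha'=u_0b_1u_1\cdots$ be execution fragments of $A$ and $B$. An index relation over $R$ between $\alpha$ and $\alpha'$ is a relation $I\subseteq\mathrm{Index}(\alpha)\times\mathrm{Index}(\alpha')$ such that (1) $(i,j)\in I$ implies $(s_i,u_j)\in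 R$; (2) $(i,j)\in I$, $(i',j')\in I$ and $i<i'$ imply $j\le j'$; (3) every index of $\alpha$ is related by $I$ to some index of $\alpha'$ and every index of $\alpha'$ is related by $I$ to some index of $\alpha$; (4) if $(i,j),(i+1,j+1)\in I$ then $a_{i+1}=b_{j+1}$; if $(i,j),(i+1,j)\in I$ then $a_{i+1}=\tau$; if $(i,j),(i,j+1)\in I$ then $b_{j+1}=\tau$. The fragments $\alpha,\alpha'$ are $R$-related, written $(\alpha,\alpha')\in R$, if such an $I$ exists. Write $(A,B)\in R$ if every execution of $A$ is $R$-related to some execution of $B$, and $[A,B]\in R$ if every finite execution of $A$ is $R$-related to some finite execution of $B$. A normed backward simulation from $A$ to $B$ is a pair $(b,n)$ where $b\subseteq\mathrm{states}(A)\times\mathrm{states}(B)$ is total (every $s\in\mathrm{states}(A)$ has $b[s]\neq\emptyset$) and $n:(\mathrm{steps}(A)\cup\mathrm{start}(A))\times\mathrm{states}(B)\to S$ for some set $S$ with a well-founded strict order $<$, such that: (1) if $s\in\mathrm{start}(A)$ and $u\in b[s]$ then (a) $u\in\mathrm{start}(B)$, or (b) there is $v\in b[s]$ with $v\xrightarrow{\tau}_B u$ and $n(s,v)<n(s,u)$; (2) if $t\xrightarrow{a}_A s$ and $u\in b[s]$ then (a) $u\in b[t]$ and $a=\tau$, or (b) there is $v\in b[t]$ with $v\xrightarrow{a}_B u$, or (c) there is $v\in b[s]$ with $v\xrightarrow{\tau}_B u$ and $n(t\xrightarrow{a}s,v)<n(t\xrightarrow{a}s,u)$. *)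

theory Defs
  imports Main "HOL-Library.Extended_Nat"
begin

text \<open>Automata. The distinguished internal action tau is a global parameter
  (shared by all automata), passed explicitly to the predicates below.\<close>

record ('s, 'a) automaton =
  states :: "'s set"
  start :: "'s set"
  acts :: "'a set"
  steps :: "('s \<times> 'a \<times> 's) set"

definition is_automaton :: "'a \<Rightarrow> ('s, 'a) automaton \<Rightarrow> bool" where
  "is_automaton tau A \<longleftrightarrow>
     start A \<noteq> {} \<and> start A \<subseteq> states A \<and> tau \<in> acts A \<and>
     steps A \<subseteq> states A \<times> acts A \<times> states A"

text \<open>An execution fragment s0 a1 s1 a2 s2 ... is represented by its length
  (number of steps; infinity for infinite fragments), the state sequence
  fstate i = s_i and the action sequence faction i = a_i (faction 0 unused).
  Values beyond the length are irrelevant.\<close>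

record ('s, 'a) frag =
  flen :: enat
  fstate :: "nat \<Rightarrow> 's"
  faction :: "nat \<Rightarrow> 'a"

definition Index :: "('s, 'a) frag \<Rightarrow> nat set" where
  "Index \<alpha> = {i. enat i \<le> flen \<alpha>}"

definition is_frag :: "('s, 'a) automaton \<Rightarrow> ('s, 'a) frag \<Rightarrow> bool" where
  "is_frag A \<alpha> \<longleftrightarrow>
     (\<forall>i\<in>Index \<alpha>. fstate \<alpha> i \<in> states A) \<and>
     (\<forall>i. Suc i \<in> Index \<alpha> \<longrightarrow>
        (fstate \<alpha> i, faction \<alpha> (Suc i), fstate \<alpha> (Suc i)) \<in> steps A)"

definition is_exec :: "('s, 'a) automaton \<Rightarrow> ('s, 'a) frag \<Rightarrow> bool" where
  "is_exec A \<alpha> \<longleftrightarrow> is_frag A \<alpha> \<and> fstate \<alpha> 0 \<in> start A"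

definition is_finite_frag :: "('s, 'a) frag \<Rightarrow> bool" where
  "is_finite_frag \<alpha> \<longleftrightarrow> flen \<alpha> \<noteq> \<infinity>"

definition index_rel ::
  "'a \<Rightarrow> ('s \<times> 't) set \<Rightarrow> ('s, 'a) frag \<Rightarrow> ('t, 'a) frag \<Rightarrow> (nat \<times> nat) set \<Rightarrow> bool" where
  "index_rel tau R \<alpha> \<alpha>' I \<longleftrightarrow>
     I \<subseteq> Index \<alpha> \<times> Index \<alpha>' \<and>
     (\<forall>i j. (i, j) \<in> I \<longrightarrow> (fstate \<alpha> i, fstate \<alpha>' j) \<in> R) \<and>
     (\<forall>i j i' j'. (i, j) \<in> I \<longrightarrow> (i', j') \<in> I \<longrightarrow> i < i' \<longrightarrow> j \<le> j') \<and>
     (\<forall>i\<in>Index \<alpha>. \<exists>j. (i, j) \<in> I) \<and>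
     (\<forall>j\<in>Index \<alpha>'. \<exists>i. (i, j) \<in> I) \<and>
     (\<forall>i j. (i, j) \<in> I \<longrightarrow> (Suc i, Suc j) \<in> I \<longrightarrow> faction \<alpha> (Suc i) = faction \<alpha>' (Suc j)) \<and>
     (\<forall>i j. (i, j) \<in> I \<longrightarrow> (Suc i, j) \<in> I \<longrightarrow> faction \<alpha> (Suc i) = tau) \<and>
     (\<forall>i j. (i, j) \<in> I \<longrightarrow> (i, Suc j) \<in> I \<longrightarrow> faction \<alpha>' (Suc j) = tau)"

definition frag_related ::
  "'a \<Rightarrow> ('s \<times> 't) set \<Rightarrow> ('s, 'a) frag \<Rightarrow> ('t, 'a) frag \<Rightarrow> bool" where
  "frag_related tau R \<alpha> \<alpha>' \<longleftrightarrow> (\<exists>I. index_rel tau R \<alpha> \<alpha>' I)"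

definition exec_corr ::
  "'a \<Rightarrow> ('s \<times> 't) set \<Rightarrow> ('s, 'a) automaton \<Rightarrow> ('t, 'a) automaton \<Rightarrow> bool" where
  "exec_corr tau R A B \<longleftrightarrow>
     (\<forall>\<alpha>. is_exec A \<alpha> \<longrightarrow> (\<exists>\<alpha>'. is_exec B \<alpha>' \<and> frag_related tau R \<alpha> \<alpha>'))"

definition fin_exec_corr ::
  "'a \<Rightarrow> ('s \<times> 't) set \<Rightarrow> ('s, 'a) automaton \<Rightarrow> ('t, 'a) automaton \<Rightarrow> bool" where
  "fin_exec_corr tau R A B \<longleftrightarrow>
     (\<forall>\<alpha>. is_exec A \<alpha> \<and> is_finite_frag \<alpha> \<longrightarrow>
        (\<exists>\<alpha>'. is_exec B \<alpha>' \<and> is_finite_frag \<alpha>' \<and> frag_related tau R \<alpha> \<alpha>'))"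

text \<open>The norm n is defined on
  (steps(A) \<union> start(A)) \<times> states(B); the disjoint union is modelled by a sum type
  (Inl for steps, Inr for start states).\<close>

definition normed_backward_sim ::
  "'a \<Rightarrow> ('s, 'a) automaton \<Rightarrow> ('t, 'a) automaton \<Rightarrow> ('s \<times> 't) set
   \<Rightarrow> (('s \<times> 'a \<times> 's) + 's \<Rightarrow> 't \<Rightarrow> 'o) \<Rightarrow> ('o \<times> 'o) set \<Rightarrow> bool" where
  "normed_backward_sim tau A B b n lt \<longleftrightarrow>
     wf lt \<and> trans lt \<and>
     b \<subseteq> states A \<times> states B \<and>
     (\<forall>s\<in>states A. b `` {s} \<noteq> {}) \<and>
     (\<forall>s\<in>start A. \<forall>u\<in>b `` {s}.
        u \<in> start B \<or>
        (\<exists>v\<in>b `` {s}. (v, tau, u) \<in> steps B \<and> (n (Inr s) v, n (Inr s) u) \<in> lt)) \<and>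
     (\<forall>t a s. (t, a, s) \<in> steps A \<longrightarrow> (\<forall>u\<in>b `` {s}.
        (u \<in> b `` {t} \<and> a = tau) \<or>
        (\<exists>v\<in>b `` {t}. (v, a, u) \<in> steps B) \<or>
        (\<exists>v\<in>b `` {s}. (v, tau, u) \<in> steps B \<and>
           (n (Inl (t, a, s)) v, n (Inl (t, a, s)) u) \<in> lt)))"

definition image_finite :: "('s, 'a) automaton \<Rightarrow> ('s \<times> 't) set \<Rightarrow> bool" where
  "image_finite A b \<longleftrightarrow> (\<forall>s\<in>states A. finite (b `` {s}))"

end

theory Submission
  imports Defs
begin

definition tr :: "('s,'a) frag \<Rightarrow> nat \<Rightarrow> ('s,'a) frag" where
  "tr \<alpha> k = \<alpha>\<lparr>flen := enat k\<rparr>"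

definition snoc :: "nat \<Rightarrow> ('t,'a) frag \<Rightarrow> 'a \<Rightarrow> 't \<Rightarrow> ('t,'a) frag" where
  "snoc m \<beta> a u = \<beta>\<lparr>flen := enat (Suc m), fstate := (fstate \<beta>)(Suc m := u),
      faction := (faction \<beta>)(Suc m := a)\<rparr>"

definition Good :: "'a \<Rightarrow> ('s \<times> 't) set \<Rightarrow> ('t,'a) automaton \<Rightarrow> ('s,'a) frag \<Rightarrow> nat \<Rightarrow> ('t,'a) frag \<Rightarrow> (nat \<times> nat) set \<Rightarrow> bool" where
  "Good tau b B \<alpha> k \<beta> I \<longleftrightarrow> is_exec B \<beta> \<and> (\<exists>m. flen \<beta> = enat m \<and> (k,m) \<in> I) \<and> index_rel tau b (tr \<alpha> k) \<beta> I"

lemma tau_ext: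
  assumes G: "Good tau b B \<alpha> k \<beta> I" and fl: "flen \<beta> = enat m" and last: "fstate \<beta> m = w"
    and st: "(w,tau,u) \<in> steps B" and bu: "(fstate \<alpha> k, u) \<in> b" and uB: "u \<in> states B"
  shows "Good tau b B \<alpha> k (snoc m \<beta> tau u) (insert (k, Suc m) I)"
proof -
  from G fl have ex: "is_exec B \<beta>" and km: "(k,m) \<in> I" and IR: "index_rel tau b (tr \<alpha> k) \<beta> I"
    by (auto simp: Good_def)
  have I1: "\<And>i j. (i,j) \<in> I \<Longrightarrow> i \<le> k \<and> j \<le> m" using IR fl
    by (auto simp: index_rel_def Index_def tr_def)
  note IR' = IR[unfolded index_rel_def Index_def tr_def, simplified]
  have mono: "\<And>i j i' j'. (i,j)\<in>I \<Longrightarrow> (i',j')\<in>I \<Longrightarrow> i<i' \<Longrightarrow> j \<le> j'" using IR' by blast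
  have act1: "\<And>i j. (i,j)\<in>I \<Longrightarrow> (Suc i, Suc j)\<in>I \<Longrightarrow> faction \<alpha> (Suc i) = faction \<beta> (Suc j)" using IR' by blast
  have act2: "\<And>i j. (i,j)\<in>I \<Longrightarrow> (Suc i, j)\<in>I \<Longrightarrow> faction \<alpha> (Suc i) = tau" using IR' by blast
  have act3: "\<And>i j. (i,j)\<in>I \<Longrightarrow> (i, Suc j)\<in>I \<Longrightarrow> faction \<beta> (Suc j) = tau" using IR' by blast
  show ?thesis
    unfolding Good_def index_rel_def Index_def tr_def snoc_def
    apply (intro conjI)
    subgoal using ex st fl last uB by (auto simp: is_exec_def is_frag_def Index_def less_Suc_eq_le)
    subgoal by auto
    subgoal using IR' fl I1 by (auto dest!: I1)
    subgoal using IR' bu I1 by (auto dest: I1)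
    subgoal using IR' I1 by (auto, fastforce+)
    subgoal using IR' by auto
    subgoal using IR' fl by (auto simp: le_Suc_eq)
    subgoal
    proof -
      have "\<forall>i j. (i, j) \<in> insert (k, Suc m) I \<longrightarrow> (Suc i, Suc j) \<in> insert (k, Suc m) I \<longrightarrow> faction \<alpha> (Suc i) = ((faction \<beta>)(Suc m := tau)) (Suc j)"
    proof (intro allI impI)
      fix i j assume a1: "(i, j) \<in> insert (k, Suc m) I" and a2: "(Suc i, Suc j) \<in> insert (k, Suc m) I"
      show "faction \<alpha> (Suc i) = ((faction \<beta>)(Suc m := tau)) (Suc j)"
      proof (cases "(Suc i, Suc j) = (k, Suc m)")
        case True
        then have "(i, m) \<in> I" using a1 I1 by auto
        then show ?thesis using True km IR' by auto
      next
        case False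
        then have "(Suc i, Suc j) \<in> I" "(i,j) \<in> I" using a1 a2 I1 by (auto dest: I1)
        then show ?thesis using act1 I1[of "Suc i" "Suc j"] by auto
      qed
    qed
    then show ?thesis by simp
    qed
    subgoal using IR' I1 km by (auto dest: I1)
    subgoal using IR' I1 km by (auto dest: I1)
    done
qed

lemma stutter:
  assumes G: "Good tau b B \<alpha> k \<beta> I" and fl: "flen \<beta> = enat m"
    and bu: "(fstate \<alpha> (Suc k), fstate \<beta> m) \<in> b" and at: "faction \<alpha> (Suc k) = tau"
  shows "Good tau b B \<alpha> (Suc k) \<beta> (insert (Suc k, m) I)"
proof -
  from G fl have ex: "is_exec B \<beta>" and km: "(k,m) \<in> I" and IR: "index_rel tau b (tr \<alpha> k) \<beta> I"
    by (auto simp: Good_def)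
  have I1: "\<And>i j. (i,j) \<in> I \<Longrightarrow> i \<le> k \<and> j \<le> m" using IR fl
    by (auto simp: index_rel_def Index_def tr_def)
  note IR' = IR[unfolded index_rel_def Index_def tr_def, simplified]
  have mono: "\<And>i j i' j'. (i,j)\<in>I \<Longrightarrow> (i',j')\<in>I \<Longrightarrow> i<i' \<Longrightarrow> j \<le> j'" using IR' by blast
  have act1: "\<And>i j. (i,j)\<in>I \<Longrightarrow> (Suc i, Suc j)\<in>I \<Longrightarrow> faction \<alpha> (Suc i) = faction \<beta> (Suc j)" using IR' by blast
  have act2: "\<And>i j. (i,j)\<in>I \<Longrightarrow> (Suc i, j)\<in>I \<Longrightarrow> faction \<alpha> (Suc i) = tau" using IR' by blast
  have act3: "\<And>i j. (i,j)\<in>I \<Longrightarrow> (i, Suc j)\<in>I \<Longrightarrow> faction \<beta> (Suc j) = tau" using IR' by blast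
  show ?thesis
    unfolding Good_def index_rel_def Index_def tr_def
    apply (intro conjI)
    subgoal using ex by simp
    subgoal using fl by auto
    subgoal using IR' fl I1 by (auto dest!: I1)
    subgoal using IR' bu I1 by (auto dest: I1)
    subgoal apply (intro allI impI) subgoal for i j i' j'
        apply (cases "(i,j) = (Suc k, m)"; cases "(i',j') = (Suc k, m)")
        using mono I1[of i j] I1[of i' j'] by auto done
    subgoal using IR' by (auto simp: le_Suc_eq)
    subgoal using IR' fl by (auto simp: le_Suc_eq)
    subgoal
    proof -
      have "\<forall>i j. (i, j) \<in> insert (Suc k, m) I \<longrightarrow> (Suc i, Suc j) \<in> insert (Suc k, m) I \<longrightarrow> faction \<alpha> (Suc i) = faction \<beta> (Suc j)"
      proof (intro allI impI)
        fix i j assume a1: "(i, j) \<in> insert (Suc k, m) I" and a2: "(Suc i, Suc j) \<in> insert (Suc k, m) I"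
        show "faction \<alpha> (Suc i) = faction \<beta> (Suc j)"
        proof (cases "(Suc i, Suc j) = (Suc k, m)")
          case True
          then have "(k, j) \<in> I" using a1 I1 by (auto dest: I1)
          then have "faction \<beta> (Suc j) = tau" using True km IR' by auto
          then show ?thesis using True at by auto
        next
          case False
          then have "(Suc i, Suc j) \<in> I" "(i,j) \<in> I" using a1 a2 I1 by (auto dest: I1)
          then show ?thesis using act1 I1[of "Suc i" "Suc j"] by auto
        qed
      qed
      then show ?thesis by simp
    qed
    subgoal apply (intro allI impI) subgoal for i j
        apply (cases "(Suc i, j) = (Suc k, m)"; cases "(i,j) = (Suc k, m)")
        using act2 I1[of i j] I1[of "Suc i" j] at by auto done
    subgoal apply (intro allI impI) subgoal for i j
        apply (cases "(i, Suc j) = (Suc k, m)"; cases "(i,j) = (Suc k, m)")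
        using act3 I1[of i j] I1[of i "Suc j"] by auto done
    done
qed

lemma step_ext:
  assumes G: "Good tau b B \<alpha> k \<beta> I" and fl: "flen \<beta> = enat m"
    and st: "(fstate \<beta> m, faction \<alpha> (Suc k), u) \<in> steps B" and bu: "(fstate \<alpha> (Suc k), u) \<in> b" and uB: "u \<in> states B"
  shows "Good tau b B \<alpha> (Suc k) (snoc m \<beta> (faction \<alpha> (Suc k)) u) (insert (Suc k, Suc m) I)"
proof -
  from G fl have ex: "is_exec B \<beta>" and km: "(k,m) \<in> I" and IR: "index_rel tau b (tr \<alpha> k) \<beta> I"
    by (auto simp: Good_def)
  have I1: "\<And>i j. (i,j) \<in> I \<Longrightarrow> i \<le> k \<and> j \<le> m" using IR fl
    by (auto simp: index_rel_def Index_def tr_def)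
  note IR' = IR[unfolded index_rel_def Index_def tr_def, simplified]
  have mono: "\<And>i j i' j'. (i,j)\<in>I \<Longrightarrow> (i',j')\<in>I \<Longrightarrow> i<i' \<Longrightarrow> j \<le> j'" using IR' by blast
  have act1: "\<And>i j. (i,j)\<in>I \<Longrightarrow> (Suc i, Suc j)\<in>I \<Longrightarrow> faction \<alpha> (Suc i) = faction \<beta> (Suc j)" using IR' by blast
  have act2: "\<And>i j. (i,j)\<in>I \<Longrightarrow> (Suc i, j)\<in>I \<Longrightarrow> faction \<alpha> (Suc i) = tau" using IR' by blast
  have act3: "\<And>i j. (i,j)\<in>I \<Longrightarrow> (i, Suc j)\<in>I \<Longrightarrow> faction \<beta> (Suc j) = tau" using IR' by blast
  show ?thesis
    unfolding Good_def index_rel_def Index_def tr_def snoc_def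
    apply (intro conjI)
    subgoal using ex st fl uB by (auto simp: is_exec_def is_frag_def Index_def less_Suc_eq_le)
    subgoal by auto
    subgoal using IR' fl I1 by (auto dest!: I1)
    subgoal using IR' bu I1 by (auto dest: I1)
    subgoal apply (intro allI impI) subgoal for i j i' j'
      proof -
        assume h: "(i, j) \<in> insert (Suc k, Suc m) I" "(i', j') \<in> insert (Suc k, Suc m) I" "i < i'"
        show "j \<le> j'"
        proof (cases "(i,j) = (Suc k, Suc m)")
          case True then show ?thesis using h I1[of i' j'] by auto
        next
          case False
          show ?thesis proof (cases "(i',j') = (Suc k, Suc m)")
            case True then show ?thesis using h I1[of i j] False by auto
          next
            case F2: False
            then have "(i,j) \<in> I" "(i',j') \<in> I" using h False by auto
            then show ?thesis using mono h(3) by blast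
          qed
        qed
      qed done
    subgoal using IR' by (auto simp: le_Suc_eq)
    subgoal using IR' fl by (auto simp: le_Suc_eq)
    subgoal
    proof -
      have "\<forall>i j. (i, j) \<in> insert (Suc k, Suc m) I \<longrightarrow> (Suc i, Suc j) \<in> insert (Suc k, Suc m) I \<longrightarrow> faction \<alpha> (Suc i) = ((faction \<beta>)(Suc m := faction \<alpha> (Suc k))) (Suc j)"
      proof (intro allI impI)
        fix i j assume a1: "(i, j) \<in> insert (Suc k, Suc m) I" and a2: "(Suc i, Suc j) \<in> insert (Suc k, Suc m) I"
        show "faction \<alpha> (Suc i) = ((faction \<beta>)(Suc m := faction \<alpha> (Suc k))) (Suc j)"
        proof (cases "(Suc i, Suc j) = (Suc k, Suc m)")
          case True
          then show ?thesis by auto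
        next
          case False
          then have "(Suc i, Suc j) \<in> I" "(i,j) \<in> I" using a1 a2 I1 by (auto dest: I1)
          then show ?thesis using act1 I1[of "Suc i" "Suc j"] by auto
        qed
      qed
      then show ?thesis by simp
    qed
    subgoal apply (intro allI impI) subgoal for i j
        apply (cases "(Suc i, j) = (Suc k, Suc m)"; cases "(i,j) = (Suc k, Suc m)")
        using act2 I1[of i j] I1[of "Suc i" j] by auto done
    subgoal apply (intro allI impI) subgoal for i j
        apply (cases "(i, Suc j) = (Suc k, Suc m)"; cases "(i,j) = (Suc k, Suc m)")
        using act3 I1[of i j] I1[of i "Suc j"] by auto done
    done
qed

definition pre :: "('t,'a) frag \<Rightarrow> ('t,'a) frag \<Rightarrow> bool" where
  "pre \<beta> \<beta>' \<longleftrightarrow> flen \<beta> \<le> flen \<beta>' \<and>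
     (\<forall>j. enat j \<le> flen \<beta> \<longrightarrow> fstate \<beta>' j = fstate \<beta> j \<and> faction \<beta>' j = faction \<beta> j)"

lemma pre_refl: "pre \<beta> \<beta>" by (simp add: pre_def)
lemma pre_trans: assumes "pre \<beta>1 \<beta>2" "pre \<beta>2 \<beta>3" shows "pre \<beta>1 \<beta>3"
proof -
  have a: "flen \<beta>1 \<le> flen \<beta>2" "flen \<beta>2 \<le> flen \<beta>3" using assms by (auto simp: pre_def)
  have "\<forall>j. enat j \<le> flen \<beta>1 \<longrightarrow> enat j \<le> flen \<beta>2" using a(1) order_trans by blast
  then show ?thesis using assms a order_trans unfolding pre_def by fastforce
qed
lemma pre_snoc: "flen \<beta> = enat m \<Longrightarrow> pre \<beta> (snoc m \<beta> a u)"
  by (auto simp: pre_def snoc_def)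

definition Seg where
  "Seg tau b B \<alpha> k v u \<longleftrightarrow> (\<forall>\<beta> I m. Good tau b B \<alpha> k \<beta> I \<and> flen \<beta> = enat m \<and> fstate \<beta> m = v \<longrightarrow>
     (\<exists>\<beta>' I' m'. Good tau b B \<alpha> (Suc k) \<beta>' I' \<and> flen \<beta>' = enat m' \<and> fstate \<beta>' m' = u \<and> pre \<beta> \<beta>' \<and> I \<subseteq> I'))"

lemma seg_exists:
  assumes sim: "normed_backward_sim tau A B b n lt" and exA: "is_exec A \<alpha>"
    and kk: "enat (Suc k) \<le> flen \<alpha>"
  shows "\<forall>u \<in> b``{fstate \<alpha> (Suc k)}. \<exists>v \<in> b``{fstate \<alpha> k}. Seg tau b B \<alpha> k v u"
proof -
  define e where "e = (fstate \<alpha> k, faction \<alpha> (Suc k), fstate \<alpha> (Suc k))"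
  have eA: "e \<in> steps A" using exA kk unfolding e_def is_exec_def is_frag_def Index_def by auto
  have wf: "wf lt" and bsub: "b \<subseteq> states A \<times> states B" and
    cl: "\<And>t a s u. (t, a, s) \<in> steps A \<Longrightarrow> u\<in>b `` {s} \<Longrightarrow>
        (u \<in> b `` {t} \<and> a = tau) \<or>
        (\<exists>v\<in>b `` {t}. (v, a, u) \<in> steps B) \<or>
        (\<exists>v\<in>b `` {s}. (v, tau, u) \<in> steps B \<and>
           (n (Inl (t, a, s)) v, n (Inl (t, a, s)) u) \<in> lt)"
    using sim unfolding normed_backward_sim_def by blast+
  have "wf (inv_image lt (n (Inl e)))" using wf by simp
  then show ?thesis
  proof (intro ballI)
    fix u assume "wf (inv_image lt (n (Inl e)))" "u \<in> b``{fstate \<alpha> (Suc k)}"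
    then show "\<exists>v \<in> b``{fstate \<alpha> k}. Seg tau b B \<alpha> k v u"
    proof (induction u rule: wf_induct_rule)
      case (less u)
      from cl[OF eA[unfolded e_def] less.prems] show ?case
      proof (elim disjE conjE bexE)
        assume u1: "u \<in> b``{fstate \<alpha> k}" and at: "faction \<alpha> (Suc k) = tau"
        have "Seg tau b B \<alpha> k u u" unfolding Seg_def
        proof (intro allI impI, elim conjE)
          fix \<beta> I m assume G: "Good tau b B \<alpha> k \<beta> I" "flen \<beta> = enat m" "fstate \<beta> m = u"
          show "\<exists>\<beta>' I' m'. Good tau b B \<alpha> (Suc k) \<beta>' I' \<and> flen \<beta>' = enat m' \<and> fstate \<beta>' m' = u \<and> pre \<beta> \<beta>' \<and> I \<subseteq> I'"
            apply (rule exI[of _ \<beta>], rule exI[of _ "insert (Suc k, m) I"], rule exI[of _ m])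
            using stutter[OF G(1,2) _ at] G less.prems by (auto simp: pre_refl)
        qed
        then show ?thesis using u1 by blast
      next
        fix v assume v1: "v \<in> b``{fstate \<alpha> k}" and st: "(v, faction \<alpha> (Suc k), u) \<in> steps B"
        have uB: "u \<in> states B" using bsub less.prems by auto
        have "Seg tau b B \<alpha> k v u" unfolding Seg_def
        proof (intro allI impI, elim conjE)
          fix \<beta> I m assume G: "Good tau b B \<alpha> k \<beta> I" "flen \<beta> = enat m" "fstate \<beta> m = v"
          show "\<exists>\<beta>' I' m'. Good tau b B \<alpha> (Suc k) \<beta>' I' \<and> flen \<beta>' = enat m' \<and> fstate \<beta>' m' = u \<and> pre \<beta> \<beta>' \<and> I \<subseteq> I'"
            apply (rule exI[of _ "snoc m \<beta> (faction \<alpha> (Suc k)) u"], rule exI[of _ "insert (Suc k, Suc m) I"], rule exI[of _ "Suc m"])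
            using step_ext[OF G(1,2) _ _ uB] G less.prems st pre_snoc[OF G(2)] by (auto simp: snoc_def)
        qed
        then show ?thesis using v1 by blast
      next
        fix w assume w1: "w \<in> b``{fstate \<alpha> (Suc k)}" and st: "(w, tau, u) \<in> steps B"
          and lw: "(n (Inl (fstate \<alpha> k, faction \<alpha> (Suc k), fstate \<alpha> (Suc k))) w, n (Inl (fstate \<alpha> k, faction \<alpha> (Suc k), fstate \<alpha> (Suc k))) u) \<in> lt"
        have uB: "u \<in> states B" using bsub less.prems by auto
        from less.IH[of w] lw w1 obtain v where v1: "v \<in> b``{fstate \<alpha> k}" and sw: "Seg tau b B \<alpha> k v w"
          by (auto simp: e_def)
        have "Seg tau b B \<alpha> k v u" unfolding Seg_def
        proof (intro allI impI, elim conjE)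
          fix \<beta> I m assume G: "Good tau b B \<alpha> k \<beta> I" "flen \<beta> = enat m" "fstate \<beta> m = v"
          then obtain \<beta>' I' m' where G': "Good tau b B \<alpha> (Suc k) \<beta>' I'" "flen \<beta>' = enat m'" "fstate \<beta>' m' = w"
            and p: "pre \<beta> \<beta>'" "I \<subseteq> I'" using sw unfolding Seg_def by blast
          show "\<exists>\<beta>' I' m'. Good tau b B \<alpha> (Suc k) \<beta>' I' \<and> flen \<beta>' = enat m' \<and> fstate \<beta>' m' = u \<and> pre \<beta> \<beta>' \<and> I \<subseteq> I'"
            apply (rule exI[of _ "snoc m' \<beta>' tau u"], rule exI[of _ "insert (Suc k, Suc m') I'"], rule exI[of _ "Suc m'"])
            using tau_ext[OF G'(1,2,3) st _ uB] less.prems p pre_trans[OF p(1) pre_snoc[OF G'(2)]] by (auto simp: snoc_def)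
        qed
        then show ?thesis using v1 by blast
      qed
    qed
  qed
qed

lemma start_exists:
  assumes sim: "normed_backward_sim tau A B b n lt" and exA: "is_exec A \<alpha>"
  shows "\<forall>u \<in> b``{fstate \<alpha> 0}. \<exists>\<beta> I m. Good tau b B \<alpha> 0 \<beta> I \<and> flen \<beta> = enat m \<and> fstate \<beta> m = u"
proof -
  define s where "s = fstate \<alpha> 0"
  have sA: "s \<in> start A" using exA by (simp add: is_exec_def s_def)
  have wf: "wf lt" and bsub: "b \<subseteq> states A \<times> states B" and
    cl: "\<And>u. u\<in>b `` {s} \<Longrightarrow>
        u \<in> start B \<or>
        (\<exists>v\<in>b `` {s}. (v, tau, u) \<in> steps B \<and> (n (Inr s) v, n (Inr s) u) \<in> lt)"
    using sim sA unfolding normed_backward_sim_def by blast+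
  have "wf (inv_image lt (n (Inr s)))" using wf by simp
  then show ?thesis unfolding s_def[symmetric]
  proof (intro ballI)
    fix u assume "wf (inv_image lt (n (Inr s)))" "u \<in> b``{s}"
    then show "\<exists>\<beta> I m. Good tau b B \<alpha> 0 \<beta> I \<and> flen \<beta> = enat m \<and> fstate \<beta> m = u"
    proof (induction u rule: wf_induct_rule)
      case (less u)
      have uB: "u \<in> states B" using bsub less.prems by auto
      from cl[OF less.prems] show ?case
      proof (elim disjE conjE bexE)
        assume us: "u \<in> start B"
        define \<beta> where "\<beta> = \<lparr>flen = enat 0, fstate = (\<lambda>_. u), faction = (\<lambda>_. tau)\<rparr>"
        have "Good tau b B \<alpha> 0 \<beta> {(0,0)}"
          using us uB less.prems
          by (auto simp: Good_def \<beta>_def is_exec_def is_frag_def Index_def index_rel_def tr_def s_def)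
        then show ?thesis by (auto simp: \<beta>_def)
      next
        fix w assume w1: "w \<in> b``{s}" and st: "(w, tau, u) \<in> steps B"
          and lw: "(n (Inr s) w, n (Inr s) u) \<in> lt"
        from less.IH[of w] lw w1 obtain \<beta> I m where G: "Good tau b B \<alpha> 0 \<beta> I" "flen \<beta> = enat m" "fstate \<beta> m = w"
          by auto
        show ?thesis
          apply (rule exI[of _ "snoc m \<beta> tau u"], rule exI[of _ "insert (0, Suc m) I"], rule exI[of _ "Suc m"])
          using tau_ext[OF G st _ uB] less.prems by (auto simp: snoc_def s_def)
      qed
    qed
  qed
qed

lemma finite_part:
  assumes sim: "normed_backward_sim tau A B b n lt" and exA: "is_exec A \<alpha>"
  shows "\<And>k. enat k \<le> flen \<alpha> \<Longrightarrow> \<forall>u \<in> b``{fstate \<alpha> k}. \<exists>\<beta> I m. Good tau b B \<alpha> k \<beta> I \<and> flen \<beta> = enat m \<and> fstate \<beta> m = u"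
proof -
  fix k show "enat k \<le> flen \<alpha> \<Longrightarrow> \<forall>u \<in> b``{fstate \<alpha> k}. \<exists>\<beta> I m. Good tau b B \<alpha> k \<beta> I \<and> flen \<beta> = enat m \<and> fstate \<beta> m = u"
  proof (induction k)
    case 0 then show ?case using start_exists[OF sim exA] by blast
  next
    case (Suc k)
    have "enat k \<le> enat (Suc k)" by simp
    then have "enat k \<le> flen \<alpha>" using Suc.prems by (rule order_trans)
    with Suc.IH have IH: "\<forall>u \<in> b``{fstate \<alpha> k}. \<exists>\<beta> I m. Good tau b B \<alpha> k \<beta> I \<and> flen \<beta> = enat m \<and> fstate \<beta> m = u" .
    show ?case
    proof
      fix u assume u: "u \<in> b``{fstate \<alpha> (Suc k)}"
      from seg_exists[OF sim exA Suc.prems] u obtain v where v: "v \<in> b``{fstate \<alpha> k}" "Seg tau b B \<alpha> k v u" by blast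
      from IH v(1) obtain \<beta> I m where "Good tau b B \<alpha> k \<beta> I \<and> flen \<beta> = enat m \<and> fstate \<beta> m = v" by blast
      with v(2) show "\<exists>\<beta> I m. Good tau b B \<alpha> (Suc k) \<beta> I \<and> flen \<beta> = enat m \<and> fstate \<beta> m = u"
        unfolding Seg_def by blast
    qed
  qed
qed

lemma part1:
  assumes sim: "normed_backward_sim tau A B b n lt"
  shows "fin_exec_corr tau b A B"
  unfolding fin_exec_corr_def
proof (intro allI impI, elim conjE)
  fix \<alpha> assume exA: "is_exec A \<alpha>" and fin: "is_finite_frag \<alpha>"
  then obtain N where N: "flen \<alpha> = enat N" by (auto simp: is_finite_frag_def)
  have "fstate \<alpha> N \<in> states A" using exA N by (auto simp: is_exec_def is_frag_def Index_def)
  then obtain u where u: "u \<in> b``{fstate \<alpha> N}" using sim unfolding normed_backward_sim_def by blast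
  from finite_part[OF sim exA, of N] N u obtain \<beta> I m where
    G: "Good tau b B \<alpha> N \<beta> I" "flen \<beta> = enat m" by auto
  have "tr \<alpha> N = \<alpha>" using N by (simp add: tr_def)
  with G show "\<exists>\<alpha>'. is_exec B \<alpha>' \<and> is_finite_frag \<alpha>' \<and> frag_related tau b \<alpha> \<alpha>'"
    by (auto simp: Good_def is_finite_frag_def frag_related_def)
qed

fun extp :: "(nat \<Rightarrow> 'x set) \<Rightarrow> (nat \<Rightarrow> 'x \<Rightarrow> 'x \<Rightarrow> bool) \<Rightarrow> nat \<Rightarrow> 'x \<Rightarrow> nat \<Rightarrow> bool" where
  "extp L E k v 0 = (v \<in> L k)"
| "extp L E k v (Suc d) = (v \<in> L k \<and> (\<exists>u. E k v u \<and> extp L E (Suc k) u d))"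

lemma extp_L: "extp L E k v d \<Longrightarrow> v \<in> L k" by (cases d) auto

lemma extp_mono: "extp L E k v d \<Longrightarrow> d' \<le> d \<Longrightarrow> extp L E k v d'"
proof (induction d arbitrary: k v d')
  case 0 then show ?case by simp
next
  case (Suc d)
  note h = Suc.prems Suc.IH
  show ?case
  proof (cases "d' = 0")
    case True then show ?thesis using extp_L[OF h(1)] by simp
  next
    case False
    then obtain d'' where d'': "d' = Suc d''" by (cases d') auto
    from h(1) obtain u where u: "v \<in> L k" "E k v u" "extp L E (Suc k) u d" by auto
    have "d'' \<le> d" using h(2) d'' by simp
    then have "extp L E (Suc k) u d''" using h(3) u(3) by blast
    then show ?thesis using u d'' by auto
  qed
qed

lemma pigeon:
  fixes Q :: "'x \<Rightarrow> nat \<Rightarrow> bool"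
  assumes fin: "finite S" and ex: "\<And>d. \<exists>x\<in>S. Q x d" and anti: "\<And>x d d'. Q x d \<Longrightarrow> d' \<le> d \<Longrightarrow> Q x d'"
  shows "\<exists>x\<in>S. \<forall>d. Q x d"
proof (rule ccontr)
  assume "\<not> ?thesis"
  then have "\<forall>x\<in>S. \<exists>d. \<not> Q x d" by blast
  from bchoice[OF this] obtain f where f0: "\<forall>x\<in>S. \<not> Q x (f x)" by blast
  then have f: "\<And>x. x \<in> S \<Longrightarrow> \<not> Q x (f x)" by blast
  define D where "D = Max (f ` S)"
  obtain x where x: "x \<in> S" "Q x D" using ex by blast
  have "f x \<le> D" using fin x(1) by (simp add: D_def)
  then have "Q x (f x)" using anti x(2) by blast
  then show False using f x(1) by blast
qed

lemma koenig:
  fixes L :: "nat \<Rightarrow> 'x set" and E :: "nat \<Rightarrow> 'x \<Rightarrow> 'x \<Rightarrow> bool"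
  assumes fin: "\<And>k. finite (L k)" and ne: "\<And>k. L k \<noteq> {}"
    and bk: "\<And>k u. u \<in> L (Suc k) \<Longrightarrow> \<exists>v\<in>L k. E k v u"
  shows "\<exists>p. \<forall>k. p k \<in> L k \<and> E k (p k) (p (Suc k))"
proof -
  have exd: "\<forall>k. \<exists>v. extp L E k v d" for d
  proof (induction d)
    case 0 then show ?case using ne by auto
  next
    case (Suc d)
    show ?case
    proof
      fix k
      obtain u where u: "extp L E (Suc k) u d" using Suc by blast
      then have "u \<in> L (Suc k)" by (rule extp_L)
      then obtain v where "v \<in> L k" "E k v u" using bk by blast
      then show "\<exists>v. extp L E k v (Suc d)" using u by auto
    qed
  qed
  define good where "good k v \<longleftrightarrow> (\<forall>d. extp L E k v d)" for k v
  have g0: "\<exists>v. good 0 v"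
  proof -
    have "\<exists>x\<in>L 0. \<forall>d. extp L E 0 x d"
    proof (rule pigeon[OF fin])
      show "\<exists>x\<in>L 0. extp L E 0 x d" for d
      proof -
        obtain v where v: "extp L E 0 v d" using exd by blast
        show ?thesis using extp_L[OF v] v by blast
      qed
      show "extp L E 0 x d'" if "extp L E 0 x d" "d' \<le> d" for x d d' using extp_mono[OF that] .
    qed
    then show ?thesis by (auto simp: good_def)
  qed
  have gs: "\<exists>u. E k v u \<and> good (Suc k) u" if g: "good k v" for k v
  proof -
    have "\<exists>x\<in>L (Suc k). \<forall>d. E k v x \<and> extp L E (Suc k) x d"
    proof (rule pigeon[OF fin])
      fix d
      from g have "extp L E k v (Suc d)" unfolding good_def by (rule spec)
      then obtain x where x: "E k v x" "extp L E (Suc k) x d" by auto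
      then show "\<exists>x\<in>L (Suc k). E k v x \<and> extp L E (Suc k) x d" using extp_L[OF x(2)] by blast
    next
      fix x d d' assume "E k v x \<and> extp L E (Suc k) x d" "d' \<le> d"
      then show "E k v x \<and> extp L E (Suc k) x d'" using extp_mono[of L E "Suc k" x d d'] by blast
    qed
    then show ?thesis by (auto simp: good_def)
  qed
  define p where "p = rec_nat (SOME v. good 0 v) (\<lambda>k pk. SOME u. E k pk u \<and> good (Suc k) u)"
  have p0: "p 0 = (SOME v. good 0 v)" by (simp add: p_def)
  have pS: "p (Suc k) = (SOME u. E k (p k) u \<and> good (Suc k) u)" for k by (simp add: p_def)
  have pg: "good k (p k)" for k
  proof (induction k)
    case 0 then show ?case using someI_ex[OF g0] p0 by simp
  next
    case (Suc k)
    then have "E k (p k) (p (Suc k)) \<and> good (Suc k) (p (Suc k))"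
      using someI_ex[OF gs[OF Suc]] pS[of k] by simp
    then show ?case by simp
  qed
  have "E k (p k) (p (Suc k))" for k
    using someI_ex[OF gs[OF pg[of k]]] pS[of k] by simp
  moreover have "p k \<in> L k" for k using pg[of k] extp_L[of L E k "p k" 0] unfolding good_def by blast
  ultimately show ?thesis by blast
qed

lemma GoodD:
  assumes "Good tau b B \<alpha> K \<beta> I"
  shows "is_exec B \<beta>"
    and "\<And>i j. (i,j) \<in> I \<Longrightarrow> i \<le> K \<and> enat j \<le> flen \<beta>"
    and "\<And>i j. (i,j) \<in> I \<Longrightarrow> (fstate \<alpha> i, fstate \<beta> j) \<in> b"
    and "\<And>i j i' j'. (i,j) \<in> I \<Longrightarrow> (i',j') \<in> I \<Longrightarrow> i < i' \<Longrightarrow> j \<le> j'"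
    and "\<And>i. i \<le> K \<Longrightarrow> \<exists>j. (i,j) \<in> I"
    and "\<And>j. enat j \<le> flen \<beta> \<Longrightarrow> \<exists>i. (i,j) \<in> I"
    and "\<And>i j. (i,j) \<in> I \<Longrightarrow> (Suc i, Suc j) \<in> I \<Longrightarrow> faction \<alpha> (Suc i) = faction \<beta> (Suc j)"
    and "\<And>i j. (i,j) \<in> I \<Longrightarrow> (Suc i, j) \<in> I \<Longrightarrow> faction \<alpha> (Suc i) = tau"
    and "\<And>i j. (i,j) \<in> I \<Longrightarrow> (i, Suc j) \<in> I \<Longrightarrow> faction \<beta> (Suc j) = tau"
    and "\<exists>m. flen \<beta> = enat m"
proof -
  have IR: "index_rel tau b (tr \<alpha> K) \<beta> I" using assms by (simp add: Good_def)
  note IR' = IR[unfolded index_rel_def Index_def tr_def, simplified]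
  show "is_exec B \<beta>" using assms by (simp add: Good_def)
  show "\<exists>m. flen \<beta> = enat m" using assms by (auto simp add: Good_def)
  show "\<And>i j. (i,j) \<in> I \<Longrightarrow> i \<le> K \<and> enat j \<le> flen \<beta>" using IR' by blast
  show "\<And>i j. (i,j) \<in> I \<Longrightarrow> (fstate \<alpha> i, fstate \<beta> j) \<in> b" using IR' by blast
  show "\<And>i j i' j'. (i,j) \<in> I \<Longrightarrow> (i',j') \<in> I \<Longrightarrow> i < i' \<Longrightarrow> j \<le> j'" using IR' by blast
  show "\<And>i. i \<le> K \<Longrightarrow> \<exists>j. (i,j) \<in> I" using IR' by blast
  show "\<And>j. enat j \<le> flen \<beta> \<Longrightarrow> \<exists>i. (i,j) \<in> I" using IR' by blast
  show "\<And>i j. (i,j) \<in> I \<Longrightarrow> (Suc i, Suc j) \<in> I \<Longrightarrow> faction \<alpha> (Suc i) = faction \<beta> (Suc j)" using IR' by blast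
  show "\<And>i j. (i,j) \<in> I \<Longrightarrow> (Suc i, j) \<in> I \<Longrightarrow> faction \<alpha> (Suc i) = tau" using IR' by blast
  show "\<And>i j. (i,j) \<in> I \<Longrightarrow> (i, Suc j) \<in> I \<Longrightarrow> faction \<beta> (Suc j) = tau" using IR' by blast
qed

lemma limit:
  assumes G: "\<And>K. Good tau b B \<alpha> K (\<beta> K) (I K)" and P: "\<And>K. pre (\<beta> K) (\<beta> (Suc K))"
    and S: "\<And>K. I K \<subseteq> I (Suc K)" and inf: "flen \<alpha> = \<infinity>"
  shows "\<exists>\<alpha>'. is_exec B \<alpha>' \<and> frag_related tau b \<alpha> \<alpha>'"
proof -
  have PK: "pre (\<beta> K) (\<beta> K')" if "K \<le> K'" for K K'
    using that
  proof (induction rule: dec_induct)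
    case base then show ?case by (rule pre_refl)
  next
    case (step n) show ?case by (rule pre_trans[OF step.IH P])
  qed
  have IK: "I K \<subseteq> I K'" if "K \<le> K'" for K K'
    by (rule lift_Suc_mono_le[of I, OF S that])
  have "\<forall>K. \<exists>m. flen (\<beta> K) = enat m" using GoodD(10)[OF G] by blast
  then obtain m where m: "\<And>K. flen (\<beta> K) = enat (m K)" by metis
  define pick where "pick j = (SOME K. j \<le> m K)" for j
  define lim where "lim = \<lparr>flen = (SUP K. enat (m K)), fstate = (\<lambda>j. fstate (\<beta> (pick j)) j),
     faction = (\<lambda>j. faction (\<beta> (pick j)) j)\<rparr>"
  have agree2: "fstate (\<beta> K') j = fstate (\<beta> K) j \<and> faction (\<beta> K') j = faction (\<beta> K) j"
    if "j \<le> m K" "j \<le> m K'" for K K' j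
  proof (cases "K \<le> K'")
    case True
    then have "pre (\<beta> K) (\<beta> K')" by (rule PK)
    then show ?thesis using that(1) m[of K] unfolding pre_def by simp
  next
    case False
    then have "pre (\<beta> K') (\<beta> K)" using PK by simp
    then show ?thesis using that(2) m[of K'] unfolding pre_def by simp
  qed
  have agree: "fstate lim j = fstate (\<beta> K) j \<and> faction lim j = faction (\<beta> K) j" if j: "j \<le> m K" for j K
  proof -
    have pk: "j \<le> m (pick j)" unfolding pick_def using j by (rule someI)
    show ?thesis using agree2[OF j pk] by (simp add: lim_def)
  qed
  have idx: "enat j \<le> flen lim \<longleftrightarrow> (\<exists>K. j \<le> m K)" for j
  proof
    assume "\<exists>K. j \<le> m K"
    then obtain K where K: "j \<le> m K" by blast
    have "enat (m K) \<le> (SUP K. enat (m K))" by (rule SUP_upper) simp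
    then show "enat j \<le> flen lim" using K by (simp add: lim_def) (metis enat_ord_simps(1) order_trans)
  next
    assume a: "enat j \<le> flen lim"
    show "\<exists>K. j \<le> m K"
    proof (rule ccontr)
      assume "\<not> (\<exists>K. j \<le> m K)"
      then have lt: "\<And>K. m K < j" by (simp add: not_le)
      then obtain j' where j': "j = Suc j'" using lt[of 0] by (cases j) auto
      have "(SUP K. enat (m K)) \<le> enat j'"
      proof (rule SUP_least)
        fix K show "enat (m K) \<le> enat j'" using lt[of K] j' by simp
      qed
      moreover have "enat j \<le> (SUP K. enat (m K))" using a by (simp add: lim_def)
      ultimately have "enat j \<le> enat j'" by (rule order_trans[rotated])
      then show False using j' by simp
    qed
  qed
  have ex: "is_exec B lim"
    unfolding is_exec_def is_frag_def Index_def
  proof (intro conjI allI impI ballI)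
    show "fstate lim 0 \<in> start B"
      using agree[of 0 0] GoodD(1)[OF G, of 0] by (simp add: is_exec_def)
  next
    fix j assume "j \<in> {i. enat i \<le> flen lim}"
    then obtain K where K: "j \<le> m K" using idx by blast
    have "fstate (\<beta> K) j \<in> states B" using GoodD(1)[OF G, of K] K m[of K]
      by (simp add: is_exec_def is_frag_def Index_def)
    then show "fstate lim j \<in> states B" using agree[OF K] by simp
  next
    fix j assume "Suc j \<in> {i. enat i \<le> flen lim}"
    then obtain K where K: "Suc j \<le> m K" using idx by blast
    have "(fstate (\<beta> K) j, faction (\<beta> K) (Suc j), fstate (\<beta> K) (Suc j)) \<in> steps B"
      using GoodD(1)[OF G, of K] K m[of K] by (simp add: is_exec_def is_frag_def Index_def)
    then show "(fstate lim j, faction lim (Suc j), fstate lim (Suc j)) \<in> steps B"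
      using agree[OF K] agree[of j K] K by simp
  qed
  define J where "J = (\<Union>K. I K)"
  have inJ: "\<And>i j. (i,j) \<in> J \<Longrightarrow> \<exists>K. (i,j) \<in> I K" by (simp add: J_def)
  have two: "\<exists>K. (i,j) \<in> I K \<and> (i',j') \<in> I K" if tw: "(i,j) \<in> J" "(i',j') \<in> J" for i j i' j'
  proof -
    obtain K1 K2 where "(i,j) \<in> I K1" "(i',j') \<in> I K2" using tw inJ by meson
    then have "(i,j) \<in> I (max K1 K2)" "(i',j') \<in> I (max K1 K2)" using IK[of K1 "max K1 K2"] IK[of K2 "max K1 K2"] by auto
    then show ?thesis by blast
  qed
  have jm: "j \<le> m K" if "(i,j) \<in> I K" for i j K
    using GoodD(2)[OF G that] m[of K] by simp
  have "index_rel tau b \<alpha> lim J"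
    unfolding index_rel_def
  proof (intro conjI allI impI ballI)
    show "J \<subseteq> Index \<alpha> \<times> Index lim"
    proof
      fix x assume "x \<in> J"
      then obtain i j K where x: "x = (i,j)" "(i,j) \<in> I K" using inJ by (cases x) blast
      then have "enat j \<le> flen lim" using idx jm by blast
      then show "x \<in> Index \<alpha> \<times> Index lim" using x inf by (simp add: Index_def)
    qed
  next
    fix i j assume "(i,j) \<in> J"
    then obtain K where K: "(i,j) \<in> I K" using inJ by blast
    then show "(fstate \<alpha> i, fstate lim j) \<in> b" using GoodD(3)[OF G K] agree[OF jm[OF K]] by simp
  next
    fix i j i' j' assume "(i,j) \<in> J" "(i',j') \<in> J" "i < i'"
    then show "j \<le> j'" using two GoodD(4)[OF G] by blast
  next
    fix i assume "i \<in> Index \<alpha>"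
    obtain j where "(i,j) \<in> I i" using GoodD(5)[OF G[of i], of i] by blast
    then show "\<exists>j. (i,j) \<in> J" by (auto simp: J_def)
  next
    fix j assume "j \<in> Index lim"
    then obtain K where K: "j \<le> m K" using idx by (auto simp: Index_def)
    then obtain i where "(i,j) \<in> I K" using GoodD(6)[OF G[of K], of j] m[of K] by auto
    then show "\<exists>i. (i,j) \<in> J" by (auto simp: J_def)
  next
    fix i j assume a: "(i,j) \<in> J" "(Suc i, Suc j) \<in> J"
    then obtain K where K: "(i,j) \<in> I K" "(Suc i, Suc j) \<in> I K" using two by blast
    show "faction \<alpha> (Suc i) = faction lim (Suc j)"
      using GoodD(7)[OF G K] agree[OF jm[OF K(2)]] by simp
  next
    fix i j assume a: "(i,j) \<in> J" "(Suc i, j) \<in> J"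
    then obtain K where K: "(i,j) \<in> I K" "(Suc i, j) \<in> I K" using two by blast
    show "faction \<alpha> (Suc i) = tau" using GoodD(8)[OF G K] .
  next
    fix i j assume a: "(i,j) \<in> J" "(i, Suc j) \<in> J"
    then obtain K where K: "(i,j) \<in> I K" "(i, Suc j) \<in> I K" using two by blast
    show "faction lim (Suc j) = tau"
      using GoodD(9)[OF G K] agree[OF jm[OF K(2)]] by simp
  qed
  then show ?thesis using ex unfolding frag_related_def by blast
qed

lemma part2:
  assumes sim: "normed_backward_sim tau A B b n lt" and imf: "image_finite A b"
  shows "exec_corr tau b A B"
  unfolding exec_corr_def
proof (intro allI impI)
  fix \<alpha> assume exA: "is_exec A \<alpha>"
  show "\<exists>\<alpha>'. is_exec B \<alpha>' \<and> frag_related tau b \<alpha> \<alpha>'"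
  proof (cases "flen \<alpha> = \<infinity>")
    case False
    then have "is_finite_frag \<alpha>" by (simp add: is_finite_frag_def)
    then show ?thesis using part1[OF sim] exA unfolding fin_exec_corr_def by blast
  next
    case inf: True
    define L where "L k = b``{fstate \<alpha> k}" for k
    have sA: "fstate \<alpha> k \<in> states A" for k using exA inf by (simp add: is_exec_def is_frag_def Index_def)
    have fin: "finite (L k)" for k using imf sA[of k] by (simp add: image_finite_def L_def)
    have ne: "L k \<noteq> {}" for k using sim sA[of k] unfolding normed_backward_sim_def L_def by blast
    have bk: "\<exists>v\<in>L k. Seg tau b B \<alpha> k v u" if "u \<in> L (Suc k)" for k u
      using seg_exists[OF sim exA, of k] inf that unfolding L_def by simp
    obtain p where p: "\<And>k. p k \<in> L k" "\<And>k. Seg tau b B \<alpha> k (p k) (p (Suc k))"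
      using koenig[of L "\<lambda>k v u. Seg tau b B \<alpha> k v u", OF fin ne bk] by blast
    define P0 where "P0 x \<longleftrightarrow> (\<exists>mm. Good tau b B \<alpha> 0 (fst x) (snd x) \<and> flen (fst x) = enat mm \<and> fstate (fst x) mm = p 0)" for x
    define PS where "PS k y x \<longleftrightarrow> (\<exists>mm. Good tau b B \<alpha> (Suc k) (fst x) (snd x) \<and> flen (fst x) = enat mm \<and> fstate (fst x) mm = p (Suc k) \<and> pre (fst y) (fst x) \<and> snd y \<subseteq> snd x)" for k y x
    define c where "c = rec_nat (SOME x. P0 x) (\<lambda>k y. SOME x. PS k y x)"
    have c0: "c 0 = (SOME x. P0 x)" by (simp add: c_def)
    have cS: "c (Suc k) = (SOME x. PS k (c k) x)" for k by (simp add: c_def)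
    define Inv where "Inv k \<longleftrightarrow> (\<exists>mm. Good tau b B \<alpha> k (fst (c k)) (snd (c k)) \<and> flen (fst (c k)) = enat mm \<and> fstate (fst (c k)) mm = p k)" for k
    have ex0: "\<exists>x. P0 x"
    proof -
      obtain \<beta> I mm where "Good tau b B \<alpha> 0 \<beta> I" "flen \<beta> = enat mm" "fstate \<beta> mm = p 0"
        using start_exists[OF sim exA] p(1)[of 0] unfolding L_def by blast
      then have "P0 (\<beta>, I)" unfolding P0_def by auto
      then show ?thesis by blast
    qed
    have exS: "\<exists>x. PS k (c k) x" if "Inv k" for k
    proof -
      from that obtain mm where "Good tau b B \<alpha> k (fst (c k)) (snd (c k))" "flen (fst (c k)) = enat mm" "fstate (fst (c k)) mm = p k"
        unfolding Inv_def by blast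
      then obtain \<beta>' I' m' where "Good tau b B \<alpha> (Suc k) \<beta>' I'" "flen \<beta>' = enat m'" "fstate \<beta>' m' = p (Suc k)"
        "pre (fst (c k)) \<beta>'" "snd (c k) \<subseteq> I'"
        using p(2)[of k] unfolding Seg_def by blast
      then have "PS k (c k) (\<beta>', I')" unfolding PS_def by auto
      then show ?thesis by blast
    qed
    have inv: "Inv k" for k
    proof (induction k)
      case 0
      have "P0 (c 0)" using someI_ex[OF ex0] c0 by simp
      then show ?case unfolding P0_def Inv_def by blast
    next
      case (Suc k)
      have "PS k (c k) (c (Suc k))" using someI_ex[OF exS[OF Suc]] cS[of k] by simp
      then show ?case unfolding PS_def Inv_def by blast
    qed
    have ps: "PS k (c k) (c (Suc k))" for k using someI_ex[OF exS[OF inv[of k]]] cS[of k] by simp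
    show ?thesis
    proof (rule limit[OF _ _ _ inf])
      show "Good tau b B \<alpha> K (fst (c K)) (snd (c K))" for K using inv[of K] unfolding Inv_def by blast
      show "pre (fst (c K)) (fst (c (Suc K)))" for K using ps[of K] unfolding PS_def by blast
      show "snd (c K) \<subseteq> snd (c (Suc K))" for K using ps[of K] unfolding PS_def by blast
    qed
  qed
qed

theorem mainTheorem2:
  fixes tau :: 'a
    and A :: "('s, 'a) automaton" and B :: "('t, 'a) automaton"
    and b :: "('s \<times> 't) set"
    and n :: "('s \<times> 'a \<times> 's) + 's \<Rightarrow> 't \<Rightarrow> 'o" and lt :: "('o \<times> 'o) set"
  assumes "is_automaton tau A" and "is_automaton tau B"
    and "normed_backward_sim tau A B b n lt"
  shows "fin_exec_corr tau b A B \<and> (image_finite A b \<longrightarrow> exec_corr tau b A B)"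
  using part1[OF assms(3)] part2[OF assms(3)] by blast

end
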